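(* Let $I$ be an instance and let $\sigma$ and $\sigma'$ be two maximal $I$-feasible sequences (i.e. $I$-feasible sequences admitting no $I$-feasible one-event extension). Then $\sigma$ and $\sigma'$ contain the same set of events.
   Context: An instance $I$ consists of finite disjoint sets $R$ (residents) and $H$ (hospitals), a positive integer quota $q_h$ for each $h\in H$, for each $r\in R$ a preference list of $r$ (a sequence of distinct members of $H$, not necessarily all), and for each $h\in H$ a preference list of $h$ (a sequence of distinct members of $R$). A match is a pair $(r,h)\in R\times H$. For a set $M$ of matches, $\mathrm{res}_h M=\{r:(r,h)\in M\}$, $\mathrm{res}\,M=\{r:(r,h)\in M\text{ for some }h\}$. An event is $(r,h)^+$ (proposal) or $(r,h)^-$ (rejection). For an event sequence $\sigma$, $\mathrm{prop}(\sigma)$, $\mathrm{rej}(\sigma)$ are the sets of matches proposed/rejected in $\sigma$ and $\mathrm{tent}(\sigma)=\mathrm{prop}(\sigma)\setminus\mathrm{rej}(\sigma)$. A match $(r,h)\in M$ is ousted from $M$ in $I$ if the list of $h$ in $I$ contains at least $q_h$ residents of $\mathrm{res}_h M$ and either $r$ is not on it or $r$ is preceded on it by at least $q_h$ residents of $\mathrm{res}_h M$. $I$-feasible sequences are defined inductively: the empty sequence is $I$-feasible; if $\sigma$ is $I$-feasible then $\sigma+(r,h)^+$ is $I$-feasible if $r\notin\mathrm{res}\,\mathrm{tent}(\sigma)$, $(r,h)\notin\mathrm{prop}(\sigma)$, $h$ is on the list of $r$ in $I$ and $(r,h')\in\mathrm{rej}(\sigma)$ for every $h'$ preceding $h$ on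 it; and $\sigma+(r,h)^-$ is $I$-feasible if $(r,h)$ is ousted from $\mathrm{prop}(\sigma)$ in $I$ and $(r,h)\notin\mathrm{rej}(\sigma)$. *)

theory Defs
  imports Main
begin

text \<open>An instance: residents R, hospitals H, quotas, and preference lists.
  Residents and hospitals live in distinct types, so R and H are disjoint.\<close>
record ('r, 'h) hr_instance =
  Res   :: "'r set"
  Hos   :: "'h set"
  quota :: "'h \<Rightarrow> nat"
  prefR :: "'r \<Rightarrow> 'h list"
  prefH :: "'h \<Rightarrow> 'r list"

definition valid_instance :: "('r, 'h) hr_instance \<Rightarrow> bool" where
  "valid_instance I \<longleftrightarrow>
     finite (Res I) \<and> finite (Hos I) \<and>
     (\<forall>h\<in>Hos I. quota I h > 0) \<and>
     (\<forall>r\<in>Res I. distinct (prefR I r) \<and> set (prefR I r) \<subseteq> Hos I) \<and>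
     (\<forall>h\<in>Hos I. distinct (prefH I h) \<and> set (prefH I h) \<subseteq> Res I)"

datatype ('r, 'h) event = Prop 'r 'h | Rej 'r 'h

definition res_h :: "'h \<Rightarrow> ('r \<times> 'h) set \<Rightarrow> 'r set" where
  "res_h h M = {r. (r, h) \<in> M}"

definition res :: "('r \<times> 'h) set \<Rightarrow> 'r set" where
  "res M = {r. \<exists>h. (r, h) \<in> M}"

definition prop_set :: "('r, 'h) event list \<Rightarrow> ('r \<times> 'h) set" where
  "prop_set \<sigma> = {(r, h). Prop r h \<in> set \<sigma>}"

definition rej_set :: "('r, 'h) event list \<Rightarrow> ('r \<times> 'h) set" where
  "rej_set \<sigma> = {(r, h). Rej r h \<in> set \<sigma>}"

definition tent :: "('r, 'h) event list \<Rightarrow> ('r \<times> 'h) set" where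
  "tent \<sigma> = prop_set \<sigma> - rej_set \<sigma>"

text \<open>Elements preceding x on list xs (meaningful when x occurs in xs).\<close>
definition preceding :: "'a list \<Rightarrow> 'a \<Rightarrow> 'a set" where
  "preceding xs x = set (takeWhile (\<lambda>y. y \<noteq> x) xs)"

definition ousted :: "('r, 'h) hr_instance \<Rightarrow> ('r \<times> 'h) set \<Rightarrow> 'r \<Rightarrow> 'h \<Rightarrow> bool" where
  "ousted I M r h \<longleftrightarrow>
     (r, h) \<in> M \<and>
     card (set (prefH I h) \<inter> res_h h M) \<ge> quota I h \<and>
     (r \<notin> set (prefH I h) \<or>
      card (preceding (prefH I h) r \<inter> res_h h M) \<ge> quota I h)"

inductive feasible :: "('r, 'h) hr_instance \<Rightarrow> ('r, 'h) event list \<Rightarrow> bool"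
  for I where
  empty: "feasible I []"
| propose: "\<lbrakk> feasible I \<sigma>; r \<in> Res I; r \<notin> res (tent \<sigma>); (r, h) \<notin> prop_set \<sigma>;
             h \<in> set (prefR I r);
             \<forall>h' \<in> preceding (prefR I r) h. (r, h') \<in> rej_set \<sigma> \<rbrakk>
            \<Longrightarrow> feasible I (\<sigma> @ [Prop r h])"
| reject: "\<lbrakk> feasible I \<sigma>; ousted I (prop_set \<sigma>) r h; (r, h) \<notin> rej_set \<sigma> \<rbrakk>
            \<Longrightarrow> feasible I (\<sigma> @ [Rej r h])"

definition maximal_feasible :: "('r, 'h) hr_instance \<Rightarrow> ('r, 'h) event list \<Rightarrow> bool" where
  "maximal_feasible I \<sigma> \<longleftrightarrow> feasible I \<sigma> \<and> (\<forall>e. \<not> feasible I (\<sigma> @ [e]))"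

end

theory Submission
  imports Defs
begin

lemma feasible_inv:
  assumes "feasible I \<sigma>"
  shows "(\<forall>r h. Rej r h \<in> set \<sigma> \<longrightarrow> Prop r h \<in> set \<sigma>) \<and>
         (\<forall>r h. Prop r h \<in> set \<sigma> \<longrightarrow> h \<in> set (prefR I r) \<and>
              (\<forall>h'\<in>preceding (prefR I r) h. Rej r h' \<in> set \<sigma>))"
  using assms
proof induction
  case empty
  then show ?case by simp
next
  case (propose \<sigma> r h)
  then show ?case by (auto simp: rej_set_def)
next
  case (reject \<sigma> r h)
  then show ?case by (auto simp: ousted_def prop_set_def)
qed

lemma feasible_prefix:
  "feasible I zs \<Longrightarrow> zs = xs @ ys \<Longrightarrow> feasible I xs"
proof (induction arbitrary: ys rule: feasible.induct)
  case empty
  then show ?case by (simp add: feasible.empty)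
next
  case (propose \<sigma> r h)
  show ?case
  proof (cases ys rule: rev_cases)
    case Nil
    then show ?thesis using propose feasible.propose by auto
  next
    case (snoc ys' y)
    then show ?thesis using propose by auto
  qed
next
  case (reject \<sigma> r h)
  show ?case
  proof (cases ys rule: rev_cases)
    case Nil
    then show ?thesis using reject feasible.reject by auto
  next
    case (snoc ys' y)
    then show ?thesis using reject by auto
  qed
qed

lemma takeWhile_two:
  "x \<in> set xs \<Longrightarrow> y \<in> set xs \<Longrightarrow> x \<noteq> y \<Longrightarrow>
   x \<in> set (takeWhile (\<lambda>z. z \<noteq> y) xs) \<or> y \<in> set (takeWhile (\<lambda>z. z \<noteq> x) xs)"
proof (induction xs)
  case Nil
  then show ?case by simp
next
  case (Cons a xs)
  show ?case
  proof (cases "a = x \<or> a = y")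
    case True
    then show ?thesis using Cons.prems by (elim disjE) simp_all
  next
    case False
    then show ?thesis using Cons by auto
  qed
qed

lemma card_mono_inter:
  "A \<subseteq> B \<Longrightarrow> card (set xs \<inter> A) \<le> card (set xs \<inter> B)"
  by (rule card_mono) auto

lemma extend:
  assumes f: "feasible I \<sigma>" and g: "feasible I (\<tau> @ [e])"
    and sub: "set \<tau> \<subseteq> set \<sigma>" and ne: "e \<notin> set \<sigma>"
  shows "feasible I (\<sigma> @ [e])"
  using g
proof cases
  case empty
  then show ?thesis by simp
next
  case (propose \<tau>' r h)
  then have t: "\<tau>' = \<tau>" and e: "e = Prop r h" by auto
  have inv: "\<And>r h. Rej r h \<in> set \<sigma> \<Longrightarrow> Prop r h \<in> set \<sigma>"
    "\<And>r h. Prop r h \<in> set \<sigma> \<Longrightarrow> h \<in> set (prefR I r) \<and>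
              (\<forall>h'\<in>preceding (prefR I r) h. Rej r h' \<in> set \<sigma>)"
    using feasible_inv[OF f] by blast+
  have pre: "\<forall>h'\<in>preceding (prefR I r) h. Rej r h' \<in> set \<sigma>"
    using propose t sub by (auto simp: rej_set_def)
  have notres: "r \<notin> res (tent \<sigma>)"
  proof
    assume "r \<in> res (tent \<sigma>)"
    then obtain h2 where p2: "Prop r h2 \<in> set \<sigma>" and r2: "Rej r h2 \<notin> set \<sigma>"
      by (auto simp: res_def tent_def prop_set_def rej_set_def)
    have h2in: "h2 \<in> set (prefR I r)" using inv(2)[OF p2] by blast
    have "h \<noteq> h2" using p2 ne e by auto
    then consider "h \<in> preceding (prefR I r) h2" | "h2 \<in> preceding (prefR I r) h"
      using takeWhile_two[OF propose(6) h2in] unfolding preceding_def by blast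
    then show False
    proof cases
      case 1
      then have "Rej r h \<in> set \<sigma>" using inv(2)[OF p2] by blast
      then have "Prop r h \<in> set \<sigma>" using inv(1) by blast
      then show False using ne e by simp
    next
      case 2
      then show False using pre r2 by blast
    qed
  qed
  have "feasible I (\<sigma> @ [Prop r h])"
    apply (rule feasible.propose[OF f])
    using propose notres ne e pre by (auto simp: prop_set_def rej_set_def)
  then show ?thesis using e by simp
next
  case (reject \<tau>' r h)
  then have t: "\<tau>' = \<tau>" and e: "e = Rej r h" by auto
  have ps: "prop_set \<tau> \<subseteq> prop_set \<sigma>" using sub by (auto simp: prop_set_def)
  have rs: "res_h h (prop_set \<tau>) \<subseteq> res_h h (prop_set \<sigma>)" using ps by (auto simp: res_h_def)
  have "ousted I (prop_set \<sigma>) r h"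
    using reject(3) t ps card_mono_inter[OF rs, of "prefH I h"]
      card_mono_inter[OF rs, of "takeWhile (\<lambda>y. y \<noteq> r) (prefH I h)"]
    unfolding ousted_def preceding_def by auto
  moreover have "(r, h) \<notin> rej_set \<sigma>" using ne e by (auto simp: rej_set_def)
  ultimately show ?thesis using feasible.reject[OF f] e by simp
qed

lemma subset_of_max:
  assumes "maximal_feasible I \<sigma>" and "maximal_feasible I \<sigma>'"
  shows "set \<sigma> \<subseteq> set \<sigma>'"
proof (rule ccontr)
  assume "\<not> set \<sigma> \<subseteq> set \<sigma>'"
  then have "\<exists>x\<in>set \<sigma>. x \<notin> set \<sigma>'" by blast
  then obtain \<tau> e rest where s: "\<sigma> = \<tau> @ e # rest" and e: "e \<notin> set \<sigma>'"
    and t: "\<forall>y\<in>set \<tau>. \<not> y \<notin> set \<sigma>'"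
    using split_list_first_prop[of \<sigma> "\<lambda>x. x \<notin> set \<sigma>'"] by blast
  have "feasible I (\<tau> @ [e])"
    using assms(1) s feasible_prefix[of I \<sigma> "\<tau> @ [e]" rest]
    unfolding maximal_feasible_def by simp
  moreover have "feasible I \<sigma>'" using assms(2) unfolding maximal_feasible_def by simp
  ultimately have "feasible I (\<sigma>' @ [e])" using extend t e by blast
  then show False using assms(2) unfolding maximal_feasible_def by blast
qed

theorem proposition2:
  fixes I :: "('r, 'h) hr_instance" and \<sigma> \<sigma>' :: "('r, 'h) event list"
  assumes "valid_instance I"
    and "maximal_feasible I \<sigma>"
    and "maximal_feasible I \<sigma>'"
  shows "set \<sigma> = set \<sigma>'"
  using subset_of_max assms by blast

end
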